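(* Let $\lambda>0$. For every irrational $\alpha$, $\pm\lambda\in\sigma^{\mathcal{H}}$. Moreover, $\sigma^{\mathcal{H}}\cap(-\lambda,\lambda)\neq\emptyset$.
   Context: $\mathbb{T}=\mathbb{R}/\mathbb{Z}$, $\mathbb{T}_0=\{\theta\in\mathbb{T}:\cos 2\pi(n\alpha+\theta)\neq 0\ \forall n\in\mathbb{Z}\}$. For $\theta\in\mathbb{T}$, $n\in\mathbb{Z}$ put $v(\theta,n)=\cos2\pi((n-1)\alpha+\theta)$ if $n$ is odd and $v(\theta,n)=\cos 2\pi(n\alpha+\theta)$ if $n$ is even; $c(\theta,n)=\lambda$ if $n$ is odd and $c(\theta,n)=\cos2\pi(n\alpha+\theta)$ if $n$ is even. For $\theta\in\mathbb{T}_0$, $\mathcal{H}_\theta$ acts on $\ell^2(\mathbb{Z})$ by $(\mathcal{H}_\theta u)(n)=c(\theta,n)u(n+1)+c(\theta,n-1)u(n-1)+v(\theta,n)u(n)$; $\sigma^{\mathcal{H}}$ is its spectrum, independent of $\theta$. *)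

theory Defs
  imports "HOL-Analysis.Analysis"
begin

definition l2Z :: "(int \<Rightarrow> complex) set" where
  "l2Z = {u. (\<lambda>n. (cmod (u n))^2) summable_on UNIV}"

text \<open>Admissible phases T_0 (theta taken in R; everything is 1-periodic in theta).\<close>
definition T0 :: "real \<Rightarrow> real set" where
  "T0 \<alpha> = {\<theta>. \<forall>n::int. cos (2 * pi * (of_int n * \<alpha> + \<theta>)) \<noteq> 0}"

definition vpot :: "real \<Rightarrow> real \<Rightarrow> int \<Rightarrow> real" where
  "vpot \<alpha> \<theta> n = (if odd n then cos (2 * pi * (of_int (n - 1) * \<alpha> + \<theta>))
                    else cos (2 * pi * (of_int n * \<alpha> + \<theta>)))"

definition chop :: "real \<Rightarrow> real \<Rightarrow> real \<Rightarrow> int \<Rightarrow> real" where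
  "chop lam \<alpha> \<theta> n = (if odd n then lam else cos (2 * pi * (of_int n * \<alpha> + \<theta>)))"

definition Hop :: "real \<Rightarrow> real \<Rightarrow> real \<Rightarrow> (int \<Rightarrow> complex) \<Rightarrow> int \<Rightarrow> complex" where
  "Hop lam \<alpha> \<theta> u n =
     of_real (chop lam \<alpha> \<theta> n) * u (n + 1) + of_real (chop lam \<alpha> \<theta> (n - 1)) * u (n - 1)
     + of_real (vpot \<alpha> \<theta> n) * u n"

text \<open>Spectrum of an operator on l2(Z): E is in the spectrum iff A - E is not a
  bijection of l2(Z) onto itself (for bounded operators the inverse is then
  automatically bounded by the open mapping theorem).\<close>
definition spec_l2Z :: "((int \<Rightarrow> complex) \<Rightarrow> int \<Rightarrow> complex) \<Rightarrow> complex set" where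
  "spec_l2Z A = {E. \<not> bij_betw (\<lambda>u n. A u n - E * u n) l2Z l2Z}"

end

theory Submission
  imports Defs
begin

definition Jac :: "(int \<Rightarrow> 'a::comm_ring_1) \<Rightarrow> (int \<Rightarrow> 'a) \<Rightarrow> (int \<Rightarrow> 'a) \<Rightarrow> int \<Rightarrow> 'a" where
  "Jac a b x n = a n * x (n+1) + a (n-1) * x (n-1) + b n * x n"

definition Iv :: "int \<Rightarrow> int set" where "Iv R = {-R..R}"

lemma finite_Iv[simp]: "finite (Iv R)" by (simp add: Iv_def)

lemma mem_Iv: "n \<in> Iv R \<longleftrightarrow> \<bar>n\<bar> \<le> R" by (auto simp: Iv_def)

lemma sum_Iv_ext:
  assumes "\<And>n. n \<notin> Iv R \<Longrightarrow> f n = 0" "R \<le> R'"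
  shows "sum f (Iv R') = sum f (Iv R)"
  by (rule sum.mono_neutral_right) (use assms in \<open>auto simp: Iv_def\<close>)

lemma sum_Iv_shift:
  assumes "\<And>n. n \<notin> Iv R \<Longrightarrow> f n = 0" "\<bar>c\<bar> \<le> 1"
  shows "sum (\<lambda>n. f (n+c)) (Iv (R+1)) = sum f (Iv R)"
proof -
  have inj: "inj_on (\<lambda>n. n + c) (Iv (R+1))" by (auto simp: inj_on_def)
  have "sum (\<lambda>n. f (n+c)) (Iv (R+1)) = sum f ((\<lambda>n. n + c) ` Iv (R+1))"
    using sum.reindex[OF inj, of f] by (simp add: comp_def)
  also have "\<dots> = sum f (Iv R)"
  proof (rule sum.mono_neutral_right)
    show "Iv R \<subseteq> (\<lambda>n. n + c) ` Iv (R + 1)"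
    proof
      fix m assume "m \<in> Iv R"
      hence "m - c \<in> Iv (R+1)" using assms(2) by (auto simp: mem_Iv)
      thus "m \<in> (\<lambda>n. n + c) ` Iv (R + 1)" by (auto intro!: image_eqI[of _ _ "m - c"])
    qed
  qed (use assms in auto)
  finally show ?thesis .
qed

lemma Jac_sym:
  fixes x y :: "int \<Rightarrow> 'a::comm_ring_1"
  assumes x: "\<And>n. n \<notin> Iv R \<Longrightarrow> x n = 0"
  shows "sum (\<lambda>n. Jac a b x n * y n) (Iv (R+1)) = sum (\<lambda>n. x n * Jac a b y n) (Iv (R+1))"
proof -
  define F where "F m = a (m-1) * x m * y (m-1)" for m
  define G where "G m = a m * x m * y (m+1)" for m
  have F0: "n \<notin> Iv R \<Longrightarrow> F n = 0" for n by (simp add: F_def x)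
  have G0: "n \<notin> Iv R \<Longrightarrow> G n = 0" for n by (simp add: G_def x)
  have L1: "sum (\<lambda>n. a n * x (n+1) * y n) (Iv (R+1)) = sum F (Iv R)"
    using sum_Iv_shift[of R F 1, OF F0] by (simp add: F_def)
  have L2: "sum (\<lambda>n. a (n-1) * x (n-1) * y n) (Iv (R+1)) = sum G (Iv R)"
    using sum_Iv_shift[of R G "-1", OF G0] by (simp add: G_def)
  have R1: "sum (\<lambda>n. x n * (a n * y (n+1))) (Iv (R+1)) = sum G (Iv R)"
    using sum_Iv_ext[of R G "R+1", OF G0] by (simp add: G_def mult_ac)
  have R2: "sum (\<lambda>n. x n * (a (n-1) * y (n-1))) (Iv (R+1)) = sum F (Iv R)"
    using sum_Iv_ext[of R F "R+1", OF F0] by (simp add: F_def mult_ac)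
  have "sum (\<lambda>n. Jac a b x n * y n) (Iv (R+1)) =
     sum (\<lambda>n. a n * x (n+1) * y n) (Iv (R+1)) + sum (\<lambda>n. a (n-1) * x (n-1) * y n) (Iv (R+1))
     + sum (\<lambda>n. b n * x n * y n) (Iv (R+1))"
    by (simp add: Jac_def sum.distrib ring_distribs)
  also have "\<dots> = sum (\<lambda>n. x n * (a n * y (n+1))) (Iv (R+1)) + sum (\<lambda>n. x n * (a (n-1) * y (n-1))) (Iv (R+1))
     + sum (\<lambda>n. x n * (b n * y n)) (Iv (R+1))"
    using L1 L2 R1 R2 by (simp add: mult_ac)
  also have "\<dots> = sum (\<lambda>n. x n * Jac a b y n) (Iv (R+1))"
    by (simp add: Jac_def sum.distrib ring_distribs)
  finally show ?thesis .
qed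

definition sup_in :: "int \<Rightarrow> (int \<Rightarrow> 'a::zero) \<Rightarrow> bool" where
  "sup_in R x \<longleftrightarrow> (\<forall>n. n \<notin> Iv R \<longrightarrow> x n = 0)"

definition nsq :: "(int \<Rightarrow> real) \<Rightarrow> real" where
  "nsq x = sum (\<lambda>n. (x n)\<^sup>2) {n. x n \<noteq> 0}"

lemma sup_in_mono: "sup_in R x \<Longrightarrow> R \<le> R' \<Longrightarrow> sup_in R' x"
  by (auto simp: sup_in_def mem_Iv)

lemma sup_in_Jac: "sup_in R x \<Longrightarrow> sup_in (R+1) (Jac a b x)"
  by (auto simp: sup_in_def mem_Iv Jac_def)

lemma nsq_Iv: assumes "sup_in R x" "R \<le> R'"
  shows "nsq x = sum (\<lambda>n. (x n)\<^sup>2) (Iv R')"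
  unfolding nsq_def
proof (rule sum.mono_neutral_left)
  show "finite (Iv R')" by simp
  show "{n. x n \<noteq> 0} \<subseteq> Iv R'" using assms by (force simp: sup_in_def mem_Iv)
  show "\<forall>i\<in>Iv R' - {n. x n \<noteq> 0}. (x i)\<^sup>2 = 0" by simp
qed

lemma nsq_nonneg: "nsq x \<ge> 0" unfolding nsq_def by (simp add: sum_nonneg)

lemma Jac_lin: "Jac a b (\<lambda>n. x n + c * y n) n = Jac a b x n + c * Jac a b y n"
  by (simp add: Jac_def algebra_simps)

lemma Jac_diff: "Jac a b (\<lambda>n. x n - y n) n = Jac a b x n - Jac a b y n"
  by (simp add: Jac_def algebra_simps)

lemma Jac_scale: "Jac a b (\<lambda>n. c * x n) n = c * Jac a b x n"
  by (simp add: Jac_def algebra_simps)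

lemma Jac_shiftE: "Jac a b x n - E * x n = Jac a (\<lambda>n. b n - E) x n"
  by (simp add: Jac_def algebra_simps)

lemma Jac_of_real: "Jac (\<lambda>n. complex_of_real (a n)) (\<lambda>n. complex_of_real (b n)) (\<lambda>n. complex_of_real (x n)) n
   = complex_of_real (Jac a b x n)"
  by (simp add: Jac_def)

lemma Hop_Jac: "Hop lam \<alpha> \<theta> u = Jac (\<lambda>n. complex_of_real (chop lam \<alpha> \<theta> n)) (\<lambda>n. complex_of_real (vpot \<alpha> \<theta> n)) u"
  by (simp add: fun_eq_iff Hop_def Jac_def)

lemma three_sq: fixes p q r :: real shows "(p+q+r)\<^sup>2 \<le> 3 * (p\<^sup>2 + q\<^sup>2 + r\<^sup>2)"
proof -
  have "3 * (p\<^sup>2 + q\<^sup>2 + r\<^sup>2) - (p+q+r)\<^sup>2 = (p-q)\<^sup>2 + (q-r)\<^sup>2 + (p-r)\<^sup>2"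
    by (simp add: power2_eq_square algebra_simps)
  moreover have "(p-q)\<^sup>2 + (q-r)\<^sup>2 + (p-r)\<^sup>2 \<ge> 0" by simp
  ultimately show ?thesis by linarith
qed

lemma Jac_bound:
  fixes a b x :: "int \<Rightarrow> real"
  assumes "\<And>n. \<bar>a n\<bar> \<le> M" "\<And>n. \<bar>b n\<bar> \<le> M" "sup_in R x" "0 \<le> R"
  shows "nsq (Jac a b x) \<le> 9 * M\<^sup>2 * nsq x"
proof -
  have x0: "n \<notin> Iv R \<Longrightarrow> (x n)\<^sup>2 = 0" for n using assms(3) by (simp add: sup_in_def)
  have sqa: "(a n)\<^sup>2 \<le> M\<^sup>2" for n
    using assms(1)[of n] by (metis abs_ge_zero abs_le_square_iff abs_of_nonneg order_trans)
  have sqb: "(b n)\<^sup>2 \<le> M\<^sup>2" for n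
    using assms(2)[of n] by (metis abs_ge_zero abs_le_square_iff abs_of_nonneg order_trans)
  have pt: "(Jac a b x n)\<^sup>2 \<le> 3 * M\<^sup>2 * ((x (n+1))\<^sup>2 + (x (n-1))\<^sup>2 + (x n)\<^sup>2)" for n
  proof -
    have A: "(a n * x (n+1))\<^sup>2 \<le> M\<^sup>2 * (x (n+1))\<^sup>2"
      by (simp add: power_mult_distrib mult_right_mono sqa)
    have B: "(a (n-1) * x (n-1))\<^sup>2 \<le> M\<^sup>2 * (x (n-1))\<^sup>2"
      by (simp add: power_mult_distrib mult_right_mono sqa)
    have C: "(b n * x n)\<^sup>2 \<le> M\<^sup>2 * (x n)\<^sup>2"
      by (simp add: power_mult_distrib mult_right_mono sqb)
    have "(Jac a b x n)\<^sup>2 \<le> 3 * ((a n * x (n+1))\<^sup>2 + (a (n-1) * x (n-1))\<^sup>2 + (b n * x n)\<^sup>2)"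
      unfolding Jac_def by (rule three_sq)
    thus ?thesis using A B C by (simp add: algebra_simps)
  qed
  have "nsq (Jac a b x) = sum (\<lambda>n. (Jac a b x n)\<^sup>2) (Iv (R+1))"
    by (rule nsq_Iv[OF sup_in_Jac[OF assms(3)]]) simp
  also have "\<dots> \<le> sum (\<lambda>n. 3 * M\<^sup>2 * ((x (n+1))\<^sup>2 + (x (n-1))\<^sup>2 + (x n)\<^sup>2)) (Iv (R+1))"
    by (rule sum_mono) (rule pt)
  also have "\<dots> = 3 * M\<^sup>2 * sum (\<lambda>n. (x (n+1))\<^sup>2 + (x (n-1))\<^sup>2 + (x n)\<^sup>2) (Iv (R+1))"
    by (simp add: sum_distrib_left)
  also have "\<dots> = 3 * M\<^sup>2 * (sum (\<lambda>n. (x (n+1))\<^sup>2) (Iv (R+1)) + sum (\<lambda>n. (x (n + -1))\<^sup>2) (Iv (R+1))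
      + sum (\<lambda>n. (x n)\<^sup>2) (Iv (R+1)))"
    by (simp add: sum.distrib)
  also have "\<dots> = 3 * M\<^sup>2 * (3 * nsq x)"
    using sum_Iv_shift[of R "\<lambda>n. (x n)\<^sup>2" 1, OF x0] sum_Iv_shift[of R "\<lambda>n. (x n)\<^sup>2" "-1", OF x0]
      sum_Iv_ext[of R "\<lambda>n. (x n)\<^sup>2" "R+1", OF x0] nsq_Iv[OF assms(3), of R]
    by simp
  finally show ?thesis by simp
qed

definition TE :: "real \<Rightarrow> real \<Rightarrow> real \<Rightarrow> real \<Rightarrow> (int \<Rightarrow> real) \<Rightarrow> int \<Rightarrow> real" where
  "TE lam \<alpha> \<theta> E x = Jac (chop lam \<alpha> \<theta>) (\<lambda>n. vpot \<alpha> \<theta> n - E) x"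

lemma chop_bound: assumes "lam > 0" shows "\<bar>chop lam \<alpha> \<theta> n\<bar> \<le> lam + 1 + \<bar>E\<bar>"
proof -
  have c: "\<bar>cos (2 * pi * (of_int n * \<alpha> + \<theta>))\<bar> \<le> 1" by (rule abs_cos_le_one)
  have e: "\<bar>E\<bar> \<ge> 0" by simp
  show ?thesis
  proof (cases "odd n")
    case True thus ?thesis using assms by (simp add: chop_def)
  next
    case False hence "chop lam \<alpha> \<theta> n = cos (2 * pi * (of_int n * \<alpha> + \<theta>))" by (simp add: chop_def)
    thus ?thesis using c assms e by linarith
  qed
qed

lemma vpot_bound: assumes "lam > 0" shows "\<bar>vpot \<alpha> \<theta> n - E\<bar> \<le> lam + 1 + \<bar>E\<bar>"
proof -
  have c: "\<bar>cos (2 * pi * (of_int n * \<alpha> + \<theta>))\<bar> \<le> 1" by (rule abs_cos_le_one)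
  have c2: "\<bar>cos (2 * pi * (of_int (n-1) * \<alpha> + \<theta>))\<bar> \<le> 1" by (rule abs_cos_le_one)
  have "\<bar>vpot \<alpha> \<theta> n\<bar> \<le> 1" unfolding vpot_def using c c2 by simp
  thus ?thesis using assms abs_triangle_ineq4[of "vpot \<alpha> \<theta> n" E] by linarith
qed

lemma TE_bound:
  assumes "lam > 0" "sup_in R x" "0 \<le> R"
  shows "nsq (TE lam \<alpha> \<theta> E x) \<le> 9 * (lam + 1 + \<bar>E\<bar>)\<^sup>2 * nsq x"
  unfolding TE_def
  by (rule Jac_bound[OF chop_bound[OF assms(1)] vpot_bound[OF assms(1)] assms(2,3)])

lemma sup_in_TE: "sup_in R x \<Longrightarrow> sup_in (R+1) (TE lam \<alpha> \<theta> E x)"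
  unfolding TE_def by (rule sup_in_Jac)

lemma TE_lin: "TE lam \<alpha> \<theta> E (\<lambda>n. x n + c * y n) n = TE lam \<alpha> \<theta> E x n + c * TE lam \<alpha> \<theta> E y n"
  unfolding TE_def by (rule Jac_lin)
lemma TE_diff: "TE lam \<alpha> \<theta> E (\<lambda>n. x n - y n) n = TE lam \<alpha> \<theta> E x n - TE lam \<alpha> \<theta> E y n"
  unfolding TE_def by (rule Jac_diff)
lemma TE_scale: "TE lam \<alpha> \<theta> E (\<lambda>n. c * x n) n = c * TE lam \<alpha> \<theta> E x n"
  unfolding TE_def by (rule Jac_scale)
lemma TE_E: "TE lam \<alpha> \<theta> E x n = TE lam \<alpha> \<theta> 0 x n - E * x n"
  unfolding TE_def by (simp add: Jac_def algebra_simps)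

definition gn :: "(int \<Rightarrow> complex) \<Rightarrow> real" where
  "gn g = infsum (\<lambda>n. (cmod (g n))\<^sup>2) UNIV"

lemma pair_bound:
  fixes g :: "int \<Rightarrow> complex" and \<psi> :: "int \<Rightarrow> real"
  assumes g: "g \<in> l2Z" and s: "sup_in R \<psi>" and R: "0 \<le> R"
  shows "cmod (\<Sum>n\<in>Iv (R+1). complex_of_real (\<psi> n) * (Hop lam \<alpha> \<theta> g n - complex_of_real E * g n))
     \<le> sqrt (nsq (TE lam \<alpha> \<theta> E \<psi>)) * sqrt (gn g)"
proof -
  define ac where "ac n = complex_of_real (chop lam \<alpha> \<theta> n)" for n
  define bc where "bc n = complex_of_real (vpot \<alpha> \<theta> n - E)" for n
  define t where "t = TE lam \<alpha> \<theta> E \<psi>"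
  have e1: "Hop lam \<alpha> \<theta> g n - complex_of_real E * g n = Jac ac bc g n" for n
    by (simp add: Hop_def Jac_def ac_def bc_def algebra_simps)
  have x0: "n \<notin> Iv R \<Longrightarrow> complex_of_real (\<psi> n) = 0" for n using s by (simp add: sup_in_def)
  have "(\<Sum>n\<in>Iv (R+1). complex_of_real (\<psi> n) * (Hop lam \<alpha> \<theta> g n - complex_of_real E * g n))
     = (\<Sum>n\<in>Iv (R+1). complex_of_real (\<psi> n) * Jac ac bc g n)" by (simp add: e1)
  also have "\<dots> = (\<Sum>n\<in>Iv (R+1). Jac ac bc (\<lambda>n. complex_of_real (\<psi> n)) n * g n)"
    using Jac_sym[of R "\<lambda>n. complex_of_real (\<psi> n)" ac bc g, OF x0] by simp
  also have "\<dots> = (\<Sum>n\<in>Iv (R+1). complex_of_real (t n) * g n)"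
    unfolding ac_def bc_def Jac_of_real t_def TE_def by simp
  finally have eq: "(\<Sum>n\<in>Iv (R+1). complex_of_real (\<psi> n) * (Hop lam \<alpha> \<theta> g n - complex_of_real E * g n))
     = (\<Sum>n\<in>Iv (R+1). complex_of_real (t n) * g n)" .
  have "cmod (\<Sum>n\<in>Iv (R+1). complex_of_real (t n) * g n) \<le> (\<Sum>n\<in>Iv (R+1). \<bar>t n\<bar> * cmod (g n))"
    by (rule order_trans[OF norm_sum]) (simp add: norm_mult)
  also have "\<dots> \<le> sqrt ((\<Sum>n\<in>Iv (R+1). (\<bar>t n\<bar>)\<^sup>2) * (\<Sum>n\<in>Iv (R+1). (cmod (g n))\<^sup>2))"
  proof -
    have "(\<Sum>n\<in>Iv (R+1). \<bar>t n\<bar> * cmod (g n))\<^sup>2 \<le> (\<Sum>n\<in>Iv (R+1). (\<bar>t n\<bar>)\<^sup>2) * (\<Sum>n\<in>Iv (R+1). (cmod (g n))\<^sup>2)"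
      by (rule Cauchy_Schwarz_ineq_sum)
    hence "sqrt ((\<Sum>n\<in>Iv (R+1). \<bar>t n\<bar> * cmod (g n))\<^sup>2) \<le> sqrt ((\<Sum>n\<in>Iv (R+1). (\<bar>t n\<bar>)\<^sup>2) * (\<Sum>n\<in>Iv (R+1). (cmod (g n))\<^sup>2))"
      by (rule real_sqrt_le_mono)
    moreover have "(\<Sum>n\<in>Iv (R+1). \<bar>t n\<bar> * cmod (g n)) \<ge> 0" by (simp add: sum_nonneg)
    ultimately show ?thesis by simp
  qed
  also have "\<dots> \<le> sqrt (nsq t * gn g)"
  proof -
    have A: "(\<Sum>n\<in>Iv (R+1). (\<bar>t n\<bar>)\<^sup>2) = nsq t"
      using nsq_Iv[OF sup_in_TE[OF s], of "R+1" lam \<alpha> \<theta> E] by (simp add: t_def)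
    have summ: "(\<lambda>n. (cmod (g n))\<^sup>2) summable_on UNIV" using g by (simp add: l2Z_def)
    have B: "(\<Sum>n\<in>Iv (R+1). (cmod (g n))\<^sup>2) \<le> gn g"
      unfolding gn_def by (rule finite_sum_le_infsum[OF summ]) auto
    show ?thesis using A B nsq_nonneg[of t] by (simp add: mult_left_mono sum_nonneg)
  qed
  finally have "cmod (\<Sum>n\<in>Iv (R+1). complex_of_real (t n) * g n) \<le> sqrt (nsq t * gn g)" .
  thus ?thesis unfolding eq real_sqrt_mult t_def .
qed

lemma surjD:
  assumes "complex_of_real E \<notin> spec_l2Z (Hop lam \<alpha> \<theta>)" "f \<in> l2Z"
  shows "\<exists>g\<in>l2Z. \<forall>n. Hop lam \<alpha> \<theta> g n - complex_of_real E * g n = f n"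
proof -
  have "(\<lambda>u n. Hop lam \<alpha> \<theta> u n - complex_of_real E * u n) ` l2Z = l2Z"
    using assms(1) by (simp add: spec_l2Z_def bij_betw_def)
  hence "f \<in> (\<lambda>u n. Hop lam \<alpha> \<theta> u n - complex_of_real E * u n) ` l2Z" using assms(2) by simp
  then obtain g where "g \<in> l2Z" "f = (\<lambda>n. Hop lam \<alpha> \<theta> g n - complex_of_real E * g n)"
    by (rule imageE)
  thus ?thesis by auto
qed

lemma pointwise_bound:
  assumes ns: "complex_of_real E \<notin> spec_l2Z (Hop lam \<alpha> \<theta>)"
  shows "\<exists>C\<ge>0. \<forall>\<psi> R. 0 \<le> R \<longrightarrow> sup_in R \<psi> \<longrightarrow> (\<psi> m)\<^sup>2 \<le> C * nsq (TE lam \<alpha> \<theta> E \<psi>)"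
proof -
  define d :: "int \<Rightarrow> complex" where "d n = (if n = m then 1 else 0)" for n
  have "(\<lambda>n. (cmod (d n))\<^sup>2) summable_on UNIV"
  proof (rule nonneg_bdd_above_summable_on)
    show "bdd_above (sum (\<lambda>n. (cmod (d n))\<^sup>2) ` {F. F \<subseteq> UNIV \<and> finite F})"
    proof (rule bdd_aboveI)
      fix x assume "x \<in> sum (\<lambda>n. (cmod (d n))\<^sup>2) ` {F. F \<subseteq> UNIV \<and> finite F}"
      then obtain F where F: "finite F" "x = sum (\<lambda>n. (cmod (d n))\<^sup>2) F" by auto
      have "sum (\<lambda>n. (cmod (d n))\<^sup>2) F = sum (\<lambda>n. if n = m then 1 else 0) F"
        by (rule sum.cong) (auto simp: d_def)
      also have "\<dots> \<le> 1" using F(1) by (simp add: sum.delta)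
      finally show "x \<le> 1" using F(2) by simp
    qed
  qed simp
  hence "d \<in> l2Z" by (simp add: l2Z_def)
  then obtain g where g: "g \<in> l2Z" and eq: "\<And>n. Hop lam \<alpha> \<theta> g n - complex_of_real E * g n = d n"
    using surjD[OF ns] by blast
  have C0: "gn g \<ge> 0" unfolding gn_def by (rule infsum_nonneg) simp
  show ?thesis
  proof (intro exI[of _ "gn g"] conjI allI impI C0)
    fix \<psi> :: "int \<Rightarrow> real" and R :: int assume R: "0 \<le> R" and s: "sup_in R \<psi>"
    define R' where "R' = max R \<bar>m\<bar>"
    have s': "sup_in R' \<psi>" using s by (rule sup_in_mono) (simp add: R'_def)
    have R'0: "0 \<le> R'" using R by (simp add: R'_def)
    have mem: "m \<in> Iv (R'+1)" by (simp add: mem_Iv R'_def)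
    have "(\<Sum>n\<in>Iv (R'+1). complex_of_real (\<psi> n) * (Hop lam \<alpha> \<theta> g n - complex_of_real E * g n))
        = (\<Sum>n\<in>Iv (R'+1). if n = m then complex_of_real (\<psi> n) else 0)"
      by (rule sum.cong) (simp_all add: eq d_def)
    also have "\<dots> = complex_of_real (\<psi> m)" using mem by (simp add: sum.delta)
    finally have "cmod (complex_of_real (\<psi> m)) \<le> sqrt (nsq (TE lam \<alpha> \<theta> E \<psi>)) * sqrt (gn g)"
      using pair_bound[OF g s' R'0, of lam \<alpha> \<theta> E] by simp
    hence "\<bar>\<psi> m\<bar> \<le> sqrt (nsq (TE lam \<alpha> \<theta> E \<psi>) * gn g)" by (simp add: real_sqrt_mult)
    hence "\<bar>\<psi> m\<bar>\<^sup>2 \<le> (sqrt (nsq (TE lam \<alpha> \<theta> E \<psi>) * gn g))\<^sup>2"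
      by (rule power_mono) simp
    also have "\<dots> = nsq (TE lam \<alpha> \<theta> E \<psi>) * gn g"
      using nsq_nonneg C0 by simp
    finally show "(\<psi> m)\<^sup>2 \<le> gn g * nsq (TE lam \<alpha> \<theta> E \<psi>)" by (simp add: mult.commute)
  qed
qed

lemma card_Iv: "0 \<le> R \<Longrightarrow> card (Iv R) = nat (2 * R + 1)"
  by (simp add: Iv_def)

lemma edge_spec:
  assumes lam: "lam > 0"
    and phi: "\<And>n. TE lam \<alpha> \<theta> E \<phi> n = 0" and phib: "\<And>n. \<bar>\<phi> n\<bar> \<le> 1" and phi0: "(\<phi> 0)\<^sup>2 = 1"
  shows "complex_of_real E \<in> spec_l2Z (Hop lam \<alpha> \<theta>)"
proof (rule ccontr)
  assume ns: "complex_of_real E \<notin> spec_l2Z (Hop lam \<alpha> \<theta>)"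
  obtain C where C0: "C \<ge> 0" and C: "\<And>\<psi> R. 0 \<le> R \<Longrightarrow> sup_in R \<psi> \<Longrightarrow> (\<psi> 0)\<^sup>2 \<le> C * nsq (TE lam \<alpha> \<theta> E \<psi>)"
    using pointwise_bound[OF ns, of 0] by blast
  define M where "M = lam + 1 + \<bar>E\<bar>"
  have M0: "M \<ge> 0" using lam by (simp add: M_def)
  define L :: nat where "L = nat \<lceil>20 * C * M\<^sup>2\<rceil> + 1"
  have L1: "real L \<ge> 1" by (simp add: L_def)
  have Lbig: "real L > 20 * C * M\<^sup>2"
    unfolding L_def by (smt (verit, best) of_nat_1 of_nat_add real_nat_ceiling_ge)
  define ch where "ch n = max 0 (1 - \<bar>real_of_int n\<bar> / real L)" for n :: int
  define w where "w n = \<phi> n * ch n" for n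
  have chi_lip: "\<bar>ch (n + c) - ch n\<bar> \<le> 1 / real L" if "\<bar>c\<bar> \<le> 1" for n c
  proof -
    have "\<bar>\<bar>real_of_int (n + c)\<bar> - \<bar>real_of_int n\<bar>\<bar> \<le> 1" using that by linarith
    hence "\<bar>\<bar>real_of_int (n + c)\<bar> / real L - \<bar>real_of_int n\<bar> / real L\<bar> \<le> 1 / real L"
      using L1 by (simp add: diff_divide_distrib[symmetric] divide_right_mono)
    thus ?thesis unfolding ch_def by linarith
  qed
  have sw: "sup_in (int L) w"
    unfolding sup_in_def w_def ch_def mem_Iv using L1
    by (auto simp: field_simps)
  have w0: "(w 0)\<^sup>2 = 1" using phi0 by (simp add: w_def ch_def)
  have a_b: "\<bar>chop lam \<alpha> \<theta> n\<bar> \<le> M" for n unfolding M_def by (rule chop_bound[OF lam])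
  have pt: "(TE lam \<alpha> \<theta> E w n)\<^sup>2 \<le> 4 * M\<^sup>2 / (real L)\<^sup>2" for n
  proof -
    have e: "TE lam \<alpha> \<theta> E w n = chop lam \<alpha> \<theta> n * \<phi> (n+1) * (ch (n+1) - ch n)
        + chop lam \<alpha> \<theta> (n-1) * \<phi> (n-1) * (ch (n + -1) - ch n)"
    proof -
      have "TE lam \<alpha> \<theta> E \<phi> n * ch n = 0" using phi by simp
      thus ?thesis unfolding TE_def Jac_def w_def by (simp add: algebra_simps)
    qed
    have t1: "\<bar>chop lam \<alpha> \<theta> n * \<phi> (n+1) * (ch (n+1) - ch n)\<bar> \<le> M * 1 * (1 / real L)"
      unfolding abs_mult by (intro mult_mono a_b phib chi_lip) (use M0 in auto)
    have t2: "\<bar>chop lam \<alpha> \<theta> (n-1) * \<phi> (n-1) * (ch (n + -1) - ch n)\<bar> \<le> M * 1 * (1 / real L)"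
      unfolding abs_mult by (intro mult_mono a_b phib chi_lip) (use M0 in auto)
    have "\<bar>TE lam \<alpha> \<theta> E w n\<bar> \<le> 2 * M / real L" using t1 t2 unfolding e by simp
    hence "\<bar>TE lam \<alpha> \<theta> E w n\<bar>\<^sup>2 \<le> (2 * M / real L)\<^sup>2" by (rule power_mono) simp
    thus ?thesis by (simp add: power_divide power_mult_distrib)
  qed
  have "nsq (TE lam \<alpha> \<theta> E w) = (\<Sum>n\<in>Iv (int L + 1). (TE lam \<alpha> \<theta> E w n)\<^sup>2)"
    by (rule nsq_Iv[OF sup_in_TE[OF sw]]) simp
  also have "\<dots> \<le> (\<Sum>n\<in>Iv (int L + 1). 4 * M\<^sup>2 / (real L)\<^sup>2)"
    by (rule sum_mono) (rule pt)
  also have "\<dots> = (2 * real L + 3) * (4 * M\<^sup>2 / (real L)\<^sup>2)"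
    by (simp add: card_Iv nat_add_distrib)
  also have "\<dots> \<le> (5 * real L) * (4 * M\<^sup>2 / (real L)\<^sup>2)"
    by (rule mult_right_mono) (use L1 in auto)
  also have "\<dots> = 20 * M\<^sup>2 / real L" using L1 by (simp add: power2_eq_square field_simps)
  finally have nb: "nsq (TE lam \<alpha> \<theta> E w) \<le> 20 * M\<^sup>2 / real L" .
  have "1 \<le> C * nsq (TE lam \<alpha> \<theta> E w)" using C[OF _ sw] w0 by simp
  also have "\<dots> \<le> C * (20 * M\<^sup>2 / real L)" by (rule mult_left_mono[OF nb C0])
  also have "\<dots> < 1" using Lbig L1 by (simp add: field_simps)
  finally show False by simp
qed

lemma int_parity_cases: obtains k :: int where "n = 2 * k" | k where "n = 2 * k + 1"
  by (metis odd_two_times_div_two_succ even_two_times_div_two)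

lemma phi_plus:
  "TE lam \<alpha> \<theta> lam (\<lambda>n. if even ((n+1) div 2) then 1 else -1) n = 0"
proof (cases n rule: int_parity_cases)
  case (1 k)
  have a: "(2*k+1+1) div 2 = k + 1" "(2*k+1) div 2 = k" "(2*k-1+1) div 2 = k" by presburger+
  have b: "odd (2*k+1)" "odd (2*k-1)" "even (2*k)" by presburger+
  have c: "even (k+1) \<longleftrightarrow> \<not> even k" by presburger
  show ?thesis unfolding 1 TE_def Jac_def chop_def vpot_def
    using a b c by (simp del: odd_add even_add; (auto simp: algebra_simps)?)
next
  case (2 k)
  have a: "(2*k+1+1+1) div 2 = k + 1" "(2*k+1+1) div 2 = k+1" "(2*k+1-1+1) div 2 = k" by presburger+
  have b: "odd (2*k+1)" "even (2*k+1+1)" "even (2*k+1-1)" by presburger+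
  have c: "even (k+1) \<longleftrightarrow> \<not> even k" by presburger
  have d: "2*k+1-1 = 2*k" by simp
  show ?thesis unfolding 2 TE_def Jac_def chop_def vpot_def
    using a b c d by (simp del: odd_add even_add; (auto simp: algebra_simps)?)
qed

lemma phi_minus:
  "TE lam \<alpha> \<theta> (-lam) (\<lambda>n. if odd n then 1 else -1) n = 0"
proof (cases n rule: int_parity_cases)
  case (1 k)
  have b: "odd (2*k+1)" "odd (2*k-1)" "even (2*k)" by presburger+
  show ?thesis unfolding 1 TE_def Jac_def chop_def vpot_def
    using b by (simp del: odd_add even_add; (auto simp: algebra_simps)?)
next
  case (2 k)
  have b: "odd (2*k+1)" "even (2*k+1+1)" "even (2*k+1-1)" by presburger+
  have d: "2*k+1-1 = 2*k" by simp
  show ?thesis unfolding 2 TE_def Jac_def chop_def vpot_def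
    using b d by (simp del: odd_add even_add; (auto simp: algebra_simps)?)
qed

lemma plus_lam_spec: "lam > 0 \<Longrightarrow> complex_of_real lam \<in> spec_l2Z (Hop lam \<alpha> \<theta>)"
  by (rule edge_spec[OF _ phi_plus]) auto

lemma minus_lam_spec: "lam > 0 \<Longrightarrow> complex_of_real (-lam) \<in> spec_l2Z (Hop lam \<alpha> \<theta>)"
  by (rule edge_spec[OF _ phi_minus]) auto

lemma sup_in_diff: "sup_in R (u::int\<Rightarrow>real) \<Longrightarrow> sup_in R v \<Longrightarrow> sup_in R (\<lambda>n. u n - v n)"
  by (auto simp: sup_in_def)
lemma sup_in_add_scale: "sup_in R (u::int\<Rightarrow>real) \<Longrightarrow> sup_in R v \<Longrightarrow> sup_in R (\<lambda>n. u n + c * v n)"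
  by (auto simp: sup_in_def)
lemma sup_in_scale: "sup_in R (u::int\<Rightarrow>real) \<Longrightarrow> sup_in R (\<lambda>n. c * u n)"
  by (auto simp: sup_in_def)

lemma nsq_scale: assumes "sup_in R x" shows "nsq (\<lambda>n. c * x n) = c\<^sup>2 * nsq x"
proof -
  have "nsq (\<lambda>n. c * x n) = (\<Sum>n\<in>Iv R. (c * x n)\<^sup>2)" by (rule nsq_Iv[OF sup_in_scale[OF assms]]) simp
  also have "\<dots> = c\<^sup>2 * (\<Sum>n\<in>Iv R. (x n)\<^sup>2)" by (simp add: sum_distrib_left power_mult_distrib)
  also have "\<dots> = c\<^sup>2 * nsq x" using nsq_Iv[OF assms, of R] by simp
  finally show ?thesis .
qed

lemma nsq_diff_le: assumes "sup_in R u" "sup_in R v"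
  shows "nsq (\<lambda>n. u n - v n) \<le> 2 * nsq u + 2 * nsq v"
proof -
  have pt: "(u n - v n)\<^sup>2 \<le> 2 * (u n)\<^sup>2 + 2 * (v n)\<^sup>2" for n
  proof -
    have "2 * (u n)\<^sup>2 + 2 * (v n)\<^sup>2 - (u n - v n)\<^sup>2 = (u n + v n)\<^sup>2" by (simp add: power2_eq_square algebra_simps)
    thus ?thesis by (smt (verit) zero_le_power2)
  qed
  have "nsq (\<lambda>n. u n - v n) = (\<Sum>n\<in>Iv R. (u n - v n)\<^sup>2)" by (rule nsq_Iv[OF sup_in_diff[OF assms]]) simp
  also have "\<dots> \<le> (\<Sum>n\<in>Iv R. 2 * (u n)\<^sup>2 + 2 * (v n)\<^sup>2)" by (rule sum_mono) (rule pt)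
  also have "\<dots> = 2 * nsq u + 2 * nsq v"
    using nsq_Iv[OF assms(1), of R] nsq_Iv[OF assms(2), of R] by (simp add: sum.distrib sum_distrib_left)
  finally show ?thesis .
qed

lemma sum_sq_le_nsq: assumes "finite F" "sup_in R x" shows "(\<Sum>n\<in>F. (x n)\<^sup>2) \<le> nsq x"
proof -
  have fin: "finite {n. x n \<noteq> 0}"
    by (rule finite_subset[of _ "Iv R"]) (use assms(2) in \<open>auto simp: sup_in_def\<close>)
  have "(\<Sum>n\<in>F. (x n)\<^sup>2) = (\<Sum>n\<in>F \<inter> {n. x n \<noteq> 0}. (x n)\<^sup>2)"
    by (rule sum.mono_neutral_right) (use assms(1) in auto)
  also have "\<dots> \<le> (\<Sum>n\<in>{n. x n \<noteq> 0}. (x n)\<^sup>2)"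
    by (rule sum_mono2[OF fin]) auto
  finally show ?thesis by (simp add: nsq_def)
qed

lemma weyl:
  assumes lam: "lam > 0"
    and P: "\<And>\<epsilon>. \<epsilon> > 0 \<Longrightarrow> \<exists>\<psi> R. 0 \<le> R \<and> sup_in R \<psi> \<and> nsq \<psi> = 1 \<and> nsq (TE lam \<alpha> \<theta> E \<psi>) \<le> \<epsilon>"
  shows "complex_of_real E \<in> spec_l2Z (Hop lam \<alpha> \<theta>)"
proof (rule ccontr)
  assume ns: "complex_of_real E \<notin> spec_l2Z (Hop lam \<alpha> \<theta>)"
  define K where "K = 9 * (lam + 1 + \<bar>E\<bar>)\<^sup>2"
  have K0: "K \<ge> 0" by (simp add: K_def)
  have Kb: "\<And>x R. 0 \<le> R \<Longrightarrow> sup_in R x \<Longrightarrow> nsq (TE lam \<alpha> \<theta> E x) \<le> K * nsq x"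
    using TE_bound[OF lam] K_def by simp
  have "\<forall>m. \<exists>C. C \<ge> 0 \<and> (\<forall>\<psi> R. 0 \<le> R \<longrightarrow> sup_in R \<psi> \<longrightarrow> (\<psi> m)\<^sup>2 \<le> C * nsq (TE lam \<alpha> \<theta> E \<psi>))"
    using pointwise_bound[OF ns] by blast
  from choice[OF this] obtain Cf where Cf0: "\<And>m. Cf m \<ge> 0"
    and Cf: "\<And>m \<psi> R. 0 \<le> R \<Longrightarrow> sup_in R \<psi> \<Longrightarrow> (\<psi> m)\<^sup>2 \<le> Cf m * nsq (TE lam \<alpha> \<theta> E \<psi>)"
    by blast
  have trunc: "\<exists>\<psi> R'. R \<le> R' \<and> sup_in R' \<psi> \<and> (\<forall>n\<in>Iv R. \<psi> n = 0) \<and> 1/2 \<le> nsq \<psi> \<and> nsq \<psi> \<le> 1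
      \<and> nsq (TE lam \<alpha> \<theta> E \<psi>) \<le> \<epsilon>" if R0: "0 \<le> R" and e0: "\<epsilon> > 0" for R \<epsilon>
  proof -
    define CR where "CR = sum Cf (Iv R)"
    have CR0: "CR \<ge> 0" by (simp add: CR_def sum_nonneg Cf0)
    define \<delta> where "\<delta> = min (\<epsilon> / (2 + 2*K*CR)) (1 / (2*CR + 2))"
    have pos0: "2 + 2*K*CR > 0" using K0 CR0 by (smt (verit) mult_nonneg_nonneg)
    have pos1: "2*CR + 2 > 0" using CR0 by simp
    have d0: "\<delta> > 0" unfolding \<delta>_def using divide_pos_pos[OF e0 pos0] divide_pos_pos[OF _ pos1, of 1] by simp
    have d1: "CR * \<delta> \<le> 1/2"
    proof -
      have "CR * \<delta> \<le> CR * (1 / (2*CR + 2))" by (rule mult_left_mono[OF _ CR0]) (simp add: \<delta>_def)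
      also have "\<dots> \<le> 1/2" using CR0 by (simp add: field_simps)
      finally show ?thesis .
    qed
    have d2: "2*\<delta> + 2*K*CR*\<delta> \<le> \<epsilon>"
    proof -
      have pos: "2 + 2*K*CR > 0" using K0 CR0 by (smt (verit) mult_nonneg_nonneg)
      have "\<delta> \<le> \<epsilon> / (2 + 2*K*CR)" by (simp add: \<delta>_def)
      hence "\<delta> * (2 + 2*K*CR) \<le> \<epsilon>" using pos by (simp add: pos_le_divide_eq)
      thus ?thesis by (simp add: algebra_simps)
    qed
    obtain \<psi>0 R0 where R00: "0 \<le> R0" and s0: "sup_in R0 \<psi>0" and n0: "nsq \<psi>0 = 1"
      and e0': "nsq (TE lam \<alpha> \<theta> E \<psi>0) \<le> \<delta>" using P[OF d0] by blast
    define R' where "R' = max R0 R"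
    define xi where "xi n = (if n \<in> Iv R then \<psi>0 n else 0)" for n
    define \<psi> where "\<psi> n = (if n \<in> Iv R then 0 else \<psi>0 n)" for n
    have s0': "sup_in R' \<psi>0" using s0 by (rule sup_in_mono) (simp add: R'_def)
    have sxi: "sup_in R xi" by (simp add: sup_in_def xi_def)
    have sxi': "sup_in R' xi" using sxi by (rule sup_in_mono) (simp add: R'_def)
    have spsi: "sup_in R' \<psi>" using s0' by (simp add: sup_in_def \<psi>_def)
    have R'0: "0 \<le> R'" using R0 by (simp add: R'_def)
    have nxi: "nsq xi \<le> CR * \<delta>"
    proof -
      have "nsq xi = (\<Sum>n\<in>Iv R. (xi n)\<^sup>2)" by (rule nsq_Iv[OF sxi]) simp
      also have "\<dots> = (\<Sum>n\<in>Iv R. (\<psi>0 n)\<^sup>2)" by (rule sum.cong) (simp_all add: xi_def)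
      also have "\<dots> \<le> (\<Sum>n\<in>Iv R. Cf n * nsq (TE lam \<alpha> \<theta> E \<psi>0))"
        by (rule sum_mono) (rule Cf[OF R00 s0])
      also have "\<dots> = CR * nsq (TE lam \<alpha> \<theta> E \<psi>0)" by (simp add: CR_def sum_distrib_right)
      also have "\<dots> \<le> CR * \<delta>" by (rule mult_left_mono[OF e0' CR0])
      finally show ?thesis .
    qed
    have split: "nsq \<psi>0 = nsq \<psi> + nsq xi"
    proof -
      have "nsq \<psi>0 = (\<Sum>n\<in>Iv R'. (\<psi>0 n)\<^sup>2)" by (rule nsq_Iv[OF s0']) simp
      also have "\<dots> = (\<Sum>n\<in>Iv R'. (\<psi> n)\<^sup>2 + (xi n)\<^sup>2)" by (rule sum.cong) (simp_all add: xi_def \<psi>_def)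
      also have "\<dots> = nsq \<psi> + nsq xi"
        using nsq_Iv[OF spsi, of R'] nsq_Iv[OF sxi', of R'] by (simp add: sum.distrib)
      finally show ?thesis .
    qed
    have psi_eq: "\<psi> = (\<lambda>n. \<psi>0 n - xi n)" by (auto simp: fun_eq_iff \<psi>_def xi_def)
    have Tpsi: "TE lam \<alpha> \<theta> E \<psi> = (\<lambda>n. TE lam \<alpha> \<theta> E \<psi>0 n - TE lam \<alpha> \<theta> E xi n)"
      unfolding psi_eq by (simp add: fun_eq_iff TE_diff)
    have "nsq (TE lam \<alpha> \<theta> E \<psi>) \<le> 2 * nsq (TE lam \<alpha> \<theta> E \<psi>0) + 2 * nsq (TE lam \<alpha> \<theta> E xi)"
      unfolding Tpsi by (rule nsq_diff_le[OF sup_in_TE[OF s0'] sup_in_TE[OF sxi']])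
    also have "\<dots> \<le> 2 * \<delta> + 2 * (K * nsq xi)"
      using e0' Kb[OF R0 sxi] by simp
    also have "\<dots> \<le> 2 * \<delta> + 2 * (K * (CR * \<delta>))"
      using mult_left_mono[OF nxi K0] by simp
    also have "\<dots> \<le> \<epsilon>" using d2 by (simp add: algebra_simps)
    finally have eT: "nsq (TE lam \<alpha> \<theta> E \<psi>) \<le> \<epsilon>" .
    have "\<forall>n\<in>Iv R. \<psi> n = 0" by (simp add: \<psi>_def)
    moreover have "1/2 \<le> nsq \<psi>" "nsq \<psi> \<le> 1" using split n0 nxi d1 nsq_nonneg[of xi] by linarith+
    moreover have "R \<le> R'" by (simp add: R'_def)
    ultimately show ?thesis using spsi eT by blast
  qed
  have "\<forall>R k. \<exists>p. 0 \<le> R \<longrightarrow> (R \<le> snd p \<and> sup_in (snd p) (fst p) \<and> (\<forall>n\<in>Iv R. fst p n = 0)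
      \<and> 1/2 \<le> nsq (fst p) \<and> nsq (fst p) \<le> 1 \<and> nsq (TE lam \<alpha> \<theta> E (fst p)) \<le> (1/16)^k)"
  proof (intro allI)
    fix R :: int and k :: nat
    show "\<exists>p. 0 \<le> R \<longrightarrow> (R \<le> snd p \<and> sup_in (snd p) (fst p) \<and> (\<forall>n\<in>Iv R. fst p n = 0)
      \<and> 1/2 \<le> nsq (fst p) \<and> nsq (fst p) \<le> 1 \<and> nsq (TE lam \<alpha> \<theta> E (fst p)) \<le> (1/16)^k)"
    proof (cases "0 \<le> R")
      case True
      have "(1/16::real)^k > 0" by simp
      from trunc[OF True this] obtain \<psi> R' where "R \<le> R' \<and> sup_in R' \<psi> \<and> (\<forall>n\<in>Iv R. \<psi> n = 0) \<and> 1/2 \<le> nsq \<psi> \<and> nsq \<psi> \<le> 1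
      \<and> nsq (TE lam \<alpha> \<theta> E \<psi>) \<le> (1/16)^k" by blast
      thus ?thesis by (intro exI[of _ "(\<psi>, R')"]) simp
    qed simp
  qed
  then obtain F where F: "\<And>R k. 0 \<le> R \<Longrightarrow> R \<le> snd (F R k) \<and> sup_in (snd (F R k)) (fst (F R k))
      \<and> (\<forall>n\<in>Iv R. fst (F R k) n = 0)
      \<and> 1/2 \<le> nsq (fst (F R k)) \<and> nsq (fst (F R k)) \<le> 1 \<and> nsq (TE lam \<alpha> \<theta> E (fst (F R k))) \<le> (1/16)^k"
    by metis
  define Rs where "Rs = rec_nat 0 (\<lambda>k r. snd (F r k) + 1)"
  have Rs0: "Rs 0 = 0" by (simp add: Rs_def)
  have RsS: "Rs (Suc k) = snd (F (Rs k) k) + 1" for k by (simp add: Rs_def)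
  have Rsk: "int k \<le> Rs k" for k
  proof (induction k)
    case 0 show ?case by (simp add: Rs0)
  next
    case (Suc k)
    have "0 \<le> Rs k" using Suc by simp
    hence "Rs k \<le> snd (F (Rs k) k)" using F by blast
    thus ?case using Suc by (simp add: RsS)
  qed
  have Rsnn: "0 \<le> Rs k" for k using Rsk[of k] by simp
  define ps where "ps k = fst (F (Rs k) k)" for k
  have Fk: "Rs k \<le> snd (F (Rs k) k) \<and> sup_in (snd (F (Rs k) k)) (ps k) \<and> (\<forall>n\<in>Iv (Rs k). ps k n = 0)
      \<and> 1/2 \<le> nsq (ps k) \<and> nsq (ps k) \<le> 1 \<and> nsq (TE lam \<alpha> \<theta> E (ps k)) \<le> (1/16)^k" for k
    unfolding ps_def using F[OF Rsnn[of k]] by blast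
  have Rs_step: "Rs k \<le> Rs (Suc k)" for k using Fk[of k] by (simp add: RsS)
  have Rs_mono: "j \<le> k \<Longrightarrow> Rs j \<le> Rs k" for j k
    using lift_Suc_mono_le[of Rs, OF Rs_step] by blast
  have sps: "sup_in (Rs (Suc k)) (ps k)" for k
    using Fk[of k] by (auto intro: sup_in_mono simp: RsS)
  have vanish: "n \<in> Iv (Rs k) \<Longrightarrow> ps k n = 0" for k n using Fk[of k] by blast
  have A: "ps i n \<noteq> 0 \<Longrightarrow> n \<in> Iv (Rs (Suc i))" for i n using sps[of i] by (auto simp: sup_in_def)
  have disj: "ps j n = 0" if pk: "ps k n \<noteq> 0" and jk: "j \<noteq> k" for j k n
  proof (rule ccontr)
    assume pj: "ps j n \<noteq> 0"
    consider "j < k" | "k < j" using jk by linarith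
    thus False
    proof cases
      case 1
      have "n \<in> Iv (Rs k)" using A[OF pj] Rs_mono[of "Suc j" k] 1 by (auto simp: mem_Iv)
      thus False using vanish pk by blast
    next
      case 2
      have "n \<in> Iv (Rs j)" using A[OF pk] Rs_mono[of "Suc k" j] 2 by (auto simp: mem_Iv)
      thus False using vanish pj by blast
    qed
  qed
  have small: "k < nat \<bar>n\<bar>" if "ps k n \<noteq> 0" for k n
  proof -
    have "\<not> \<bar>n\<bar> \<le> Rs k" using vanish[of n k] that by (auto simp: mem_Iv)
    hence "int k < \<bar>n\<bar>" using Rsk[of k] by linarith
    thus ?thesis by linarith
  qed
  define b where "b k = (1/2::real)^k" for k
  have b0: "b k > 0" for k by (simp add: b_def)
  have bsq: "(b k)\<^sup>2 = (1/4)^k" for k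
    by (simp add: b_def power_mult_distrib[symmetric] power2_eq_square)
  define f where "f n = (\<Sum>k<nat \<bar>n\<bar>. b k * ps k n)" for n
  have fj: "f n = b j * ps j n" if pj: "ps j n \<noteq> 0" for j n
  proof -
    have jlt: "j < nat \<bar>n\<bar>" by (rule small[OF pj])
    have "f n = (\<Sum>k<nat \<bar>n\<bar>. if k = j then b j * ps j n else 0)"
      unfolding f_def by (rule sum.cong) (use disj[OF pj] in auto)
    also have "\<dots> = b j * ps j n" using jlt by (simp add: sum.delta)
    finally show ?thesis .
  qed
  have fsq: "(f n)\<^sup>2 = (\<Sum>k<N. (b k)\<^sup>2 * (ps k n)\<^sup>2)" if NN: "nat \<bar>n\<bar> \<le> N" for n N
  proof (cases "\<exists>j. ps j n \<noteq> 0")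
    case True
    then obtain j where pj: "ps j n \<noteq> 0" by blast
    have jlt: "j < N" using small[OF pj] NN by linarith
    have "(\<Sum>k<N. (b k)\<^sup>2 * (ps k n)\<^sup>2) = (\<Sum>k<N. if k = j then (b j)\<^sup>2 * (ps j n)\<^sup>2 else 0)"
      by (rule sum.cong) (use disj[OF pj] in auto)
    also have "\<dots> = (b j)\<^sup>2 * (ps j n)\<^sup>2" using jlt by (simp add: sum.delta)
    finally show ?thesis using fj[OF pj] by (simp add: power_mult_distrib)
  next
    case False
    hence "\<And>k. ps k n = 0" by blast
    thus ?thesis by (simp add: f_def)
  qed
  have l2: "(\<lambda>n. (cmod (complex_of_real (f n)))\<^sup>2) summable_on UNIV"
  proof (rule nonneg_bdd_above_summable_on)
    show "bdd_above (sum (\<lambda>n. (cmod (complex_of_real (f n)))\<^sup>2) ` {F. F \<subseteq> UNIV \<and> finite F})"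
    proof (rule bdd_aboveI)
      fix x assume "x \<in> sum (\<lambda>n. (cmod (complex_of_real (f n)))\<^sup>2) ` {F. F \<subseteq> UNIV \<and> finite F}"
      then obtain Fs where Fs: "finite Fs" and xeq: "x = sum (\<lambda>n. (cmod (complex_of_real (f n)))\<^sup>2) Fs" by auto
      define N where "N = (\<Sum>n\<in>Fs. nat \<bar>n\<bar>)"
      have NN: "nat \<bar>n\<bar> \<le> N" if "n \<in> Fs" for n
        unfolding N_def by (rule member_le_sum[OF that _ Fs]) simp
      have "x = (\<Sum>n\<in>Fs. (f n)\<^sup>2)" by (simp add: xeq)
      also have "\<dots> = (\<Sum>n\<in>Fs. \<Sum>k<N. (b k)\<^sup>2 * (ps k n)\<^sup>2)"
        by (rule sum.cong) (simp_all add: fsq NN)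
      also have "\<dots> = (\<Sum>k<N. (b k)\<^sup>2 * (\<Sum>n\<in>Fs. (ps k n)\<^sup>2))"
        by (subst sum.swap) (simp add: sum_distrib_left)
      also have "\<dots> \<le> (\<Sum>k<N. (b k)\<^sup>2 * 1)"
      proof (rule sum_mono)
        fix k assume "k \<in> {..<N}"
        have "(\<Sum>n\<in>Fs. (ps k n)\<^sup>2) \<le> nsq (ps k)" by (rule sum_sq_le_nsq[OF Fs sps])
        also have "\<dots> \<le> 1" using Fk[of k] by blast
        finally show "(b k)\<^sup>2 * (\<Sum>n\<in>Fs. (ps k n)\<^sup>2) \<le> (b k)\<^sup>2 * 1"
          by (rule mult_left_mono) simp
      qed
      also have "\<dots> = (\<Sum>k<N. (1/4::real)^k)" by (simp add: bsq)
      also have "\<dots> = (1 - (1/4)^N) / (1 - 1/4)" by (simp add: sum_gp_strict)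
      also have "\<dots> \<le> 4/3" by simp
      finally show "x \<le> 4/3" .
    qed
  qed simp
  hence fl2: "(\<lambda>n. complex_of_real (f n)) \<in> l2Z" by (simp add: l2Z_def)
  obtain g where g: "g \<in> l2Z" and geq: "\<And>n. Hop lam \<alpha> \<theta> g n - complex_of_real E * g n = complex_of_real (f n)"
    using surjD[OF ns fl2] by blast
  define G where "G = gn g"
  have G0: "G \<ge> 0" unfolding G_def gn_def by (rule infsum_nonneg) simp
  have key: "(1/4::real)^k / 4 \<le> (1/16)^k * G" for k
  proof -
    define R where "R = Rs (Suc k)"
    have R0: "0 \<le> R" by (simp add: R_def Rsnn)
    have s: "sup_in R (ps k)" by (simp add: R_def sps)
    have pt: "ps k n * f n = b k * (ps k n)\<^sup>2" for n
      by (cases "ps k n = 0") (simp_all add: fj power2_eq_square)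
    have "(\<Sum>n\<in>Iv (R+1). complex_of_real (ps k n) * (Hop lam \<alpha> \<theta> g n - complex_of_real E * g n))
        = complex_of_real (\<Sum>n\<in>Iv (R+1). ps k n * f n)"
      by (simp add: geq)
    also have "(\<Sum>n\<in>Iv (R+1). ps k n * f n) = b k * (\<Sum>n\<in>Iv (R+1). (ps k n)\<^sup>2)"
      by (simp add: pt sum_distrib_left)
    also have "(\<Sum>n\<in>Iv (R+1). (ps k n)\<^sup>2) = nsq (ps k)" by (rule nsq_Iv[OF s, symmetric]) simp
    finally have "\<bar>b k * nsq (ps k)\<bar> \<le> sqrt (nsq (TE lam \<alpha> \<theta> E (ps k))) * sqrt G"
      using pair_bound[OF g s R0, of lam \<alpha> \<theta> E] by (simp add: G_def norm_mult abs_mult)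
    hence "b k * nsq (ps k) \<le> sqrt (nsq (TE lam \<alpha> \<theta> E (ps k)) * G)"
      by (simp add: real_sqrt_mult)
    moreover have "b k / 2 \<le> b k * nsq (ps k)"
      using Fk[of k] b0[of k] by (simp add: mult_left_mono[of "1/2" _ "b k", simplified])
    ultimately have "b k / 2 \<le> sqrt (nsq (TE lam \<alpha> \<theta> E (ps k)) * G)" by linarith
    hence "(b k / 2)\<^sup>2 \<le> (sqrt (nsq (TE lam \<alpha> \<theta> E (ps k)) * G))\<^sup>2"
      by (rule power_mono) (use b0[of k] in simp)
    also have "\<dots> = nsq (TE lam \<alpha> \<theta> E (ps k)) * G" using nsq_nonneg G0 by simp
    also have "\<dots> \<le> (1/16)^k * G" using Fk[of k] G0 by (simp add: mult_right_mono)
    finally show ?thesis by (simp add: power_divide bsq)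
  qed
  define k where "k = nat \<lceil>4 * G\<rceil>"
  have k1: "real k \<ge> 4 * G" unfolding k_def by (rule real_nat_ceiling_ge)
  have "k < 2^k" by (rule less_exp)
  also have "(2::nat)^k \<le> 4^k" by (rule power_mono) simp_all
  finally have "real k < 4^k" by (metis of_nat_less_iff of_nat_numeral of_nat_power)
  have q: "(1/4::real)^k = 4^k * (1/16)^k" by (simp add: power_mult_distrib[symmetric])
  have "4^k * (1/16::real)^k / 4 \<le> (1/16)^k * G" using key[of k] q by simp
  hence "4^k * (1/16::real)^k \<le> (4 * G) * (1/16)^k" by (simp add: algebra_simps)
  hence "(4::real)^k \<le> 4 * G" by (rule mult_right_le_imp_le) simp
  with \<open>real k < 4^k\<close> k1 show False by linarith
qed

lemma TE_sym:
  assumes "sup_in R x"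
  shows "(\<Sum>n\<in>Iv (R+1). TE lam \<alpha> \<theta> E x n * y n) = (\<Sum>n\<in>Iv (R+1). x n * TE lam \<alpha> \<theta> E y n)"
  unfolding TE_def by (rule Jac_sym) (use assms in \<open>simp add: sup_in_def\<close>)

lemma nsq_add_scale:
  assumes "sup_in R u" "sup_in R v"
  shows "nsq (\<lambda>n. u n + c * v n) = nsq u + 2 * c * (\<Sum>n\<in>Iv R. u n * v n) + c\<^sup>2 * nsq v"
proof -
  have "nsq (\<lambda>n. u n + c * v n) = (\<Sum>n\<in>Iv R. (u n + c * v n)\<^sup>2)"
    by (rule nsq_Iv[OF sup_in_add_scale[OF assms]]) simp
  also have "\<dots> = (\<Sum>n\<in>Iv R. (u n)\<^sup>2 + 2 * c * (u n * v n) + c\<^sup>2 * (v n)\<^sup>2)"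
    by (rule sum.cong) (simp_all add: power2_eq_square algebra_simps)
  also have "\<dots> = nsq u + 2 * c * (\<Sum>n\<in>Iv R. u n * v n) + c\<^sup>2 * nsq v"
    using nsq_Iv[OF assms(1), of R] nsq_Iv[OF assms(2), of R]
    by (simp add: sum.distrib sum_distrib_left)
  finally show ?thesis .
qed

lemma quad_aux:
  fixes s2 t A B Y P HY \<eta> K :: real
  assumes h: "s2 * (1 + 2*(-t)*A + t\<^sup>2*Y) \<le> P + 2*(-t)*B + t\<^sup>2*HY"
    and BA: "B = Y + s2*A" and Pl: "P \<le> s2 + \<eta>" and HYl: "HY \<le> K*Y" and s20: "s2 \<ge> 0"
    and Y0: "Y \<ge> 0" and K0: "K > 0" and t: "t = 1/K"
  shows "Y \<le> K * \<eta>"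
proof -
  have l: "s2 * (1 + 2*(-t)*A + t\<^sup>2*Y) = s2 + s2*t\<^sup>2*Y - 2*t*(s2*A)" by (simp add: algebra_simps)
  have r: "P + 2*(-t)*B + t\<^sup>2*HY = P - 2*t*Y - 2*t*(s2*A) + t\<^sup>2*HY" by (simp add: BA algebra_simps)
  have e1: "s2 + s2*t\<^sup>2*Y \<le> P - 2*t*Y + t\<^sup>2*HY" using h l r by linarith
  have e2: "t\<^sup>2*HY \<le> t\<^sup>2*(K*Y)" by (rule mult_left_mono[OF HYl]) simp
  have e3: "t\<^sup>2*(K*Y) = t*Y" using K0 by (simp add: t power2_eq_square field_simps)
  have e4: "s2*t\<^sup>2*Y \<ge> 0" using s20 Y0 by simp
  have "t*Y \<le> \<eta>" using e1 e2 e3 e4 Pl by linarith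
  hence "K*(t*Y) \<le> K*\<eta>" using K0 by simp
  thus ?thesis using K0 by (simp add: t)
qed

lemma normalize:
  assumes "sup_in R x" "0 \<le> R" "nsq x > 0"
  shows "sup_in R (\<lambda>n. (1 / sqrt (nsq x)) * x n) \<and> nsq (\<lambda>n. (1 / sqrt (nsq x)) * x n) = 1
    \<and> nsq (TE lam \<alpha> \<theta> E (\<lambda>n. (1 / sqrt (nsq x)) * x n)) = nsq (TE lam \<alpha> \<theta> E x) / nsq x"
proof (intro conjI)
  show "sup_in R (\<lambda>n. (1 / sqrt (nsq x)) * x n)" by (rule sup_in_scale[OF assms(1)])
  show "nsq (\<lambda>n. (1 / sqrt (nsq x)) * x n) = 1"
    using nsq_scale[OF assms(1), of "1 / sqrt (nsq x)"] assms(3) by (simp add: power_divide)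
  have "TE lam \<alpha> \<theta> E (\<lambda>n. (1 / sqrt (nsq x)) * x n) = (\<lambda>n. (1 / sqrt (nsq x)) * TE lam \<alpha> \<theta> E x n)"
    by (rule ext) (rule TE_scale)
  thus "nsq (TE lam \<alpha> \<theta> E (\<lambda>n. (1 / sqrt (nsq x)) * x n)) = nsq (TE lam \<alpha> \<theta> E x) / nsq x"
    using nsq_scale[OF sup_in_TE[OF assms(1)], of "1 / sqrt (nsq x)" lam \<alpha> \<theta> E] assms(3) by (simp add: power_divide)
qed

lemma Iv3: "Iv 3 = {-3,-2,-1,0,1,2,3}" by (auto simp: Iv_def)
lemma Iv4: "Iv 4 = {-4,-3,-2,-1,0,1,2,3,4}" by (auto simp: Iv_def)

lemma test_vec:
  assumes lam: "lam > 0" and c0: "cos (2*pi*\<theta>) \<noteq> 0"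
  shows "\<exists>x. sup_in 3 x \<and> nsq x > 0 \<and> nsq (TE lam \<alpha> \<theta> 0 x) < lam\<^sup>2 * nsq x"
proof -
  define c where "c = cos (2*pi*\<theta>)"
  define x :: "int \<Rightarrow> real" where "x n = (if n = -2 then c/lam else if n = -1 then -(c/lam) else if n = 0 then 1
      else if n = 2 then -(c/lam) else if n = 3 then c/lam else 0)" for n
  have l0: "lam \<noteq> 0" using lam by simp
  have sx: "sup_in 3 x" by (auto simp: sup_in_def x_def mem_Iv)
  have nx: "nsq x = 1 + 4 * (c/lam)\<^sup>2"
    using nsq_Iv[OF sx, of 3] by (simp add: Iv3 x_def)
  have v: "TE lam \<alpha> \<theta> 0 x (-4) = 0" "TE lam \<alpha> \<theta> 0 x (-3) = c" "TE lam \<alpha> \<theta> 0 x (-2) = 0"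
     "TE lam \<alpha> \<theta> 0 x (-1) = lam" "TE lam \<alpha> \<theta> 0 x 0 = 0" "TE lam \<alpha> \<theta> 0 x 1 = 0"
     "TE lam \<alpha> \<theta> 0 x 2 = 0" "TE lam \<alpha> \<theta> 0 x 3 = 0" "TE lam \<alpha> \<theta> 0 x 4 = c"
    using l0 by (simp_all add: TE_def Jac_def chop_def vpot_def x_def c_def)
  have nH: "nsq (TE lam \<alpha> \<theta> 0 x) = lam\<^sup>2 + 2 * c\<^sup>2"
    using nsq_Iv[OF sup_in_TE[OF sx], of 4 lam \<alpha> \<theta> 0] by (simp add: Iv4 v)
  have cpos: "c\<^sup>2 > 0" using c0 by (simp add: c_def)
  have "lam\<^sup>2 * nsq x = lam\<^sup>2 + 4 * c\<^sup>2" using l0 by (simp add: nx power_divide field_simps)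
  hence "nsq (TE lam \<alpha> \<theta> 0 x) < lam\<^sup>2 * nsq x" using nH cpos by linarith
  moreover have "nsq x > 0" using nx by (simp add: add_pos_nonneg)
  ultimately show ?thesis using sx by blast
qed

lemma var_part:
  assumes lam: "lam > 0" and c0: "cos (2*pi*\<theta>) \<noteq> 0"
  shows "\<exists>E. - lam < E \<and> E < lam \<and> (\<forall>\<epsilon>>0. \<exists>\<psi> R. 0 \<le> R \<and> sup_in R \<psi> \<and> nsq \<psi> = 1 \<and> nsq (TE lam \<alpha> \<theta> E \<psi>) \<le> \<epsilon>)"
proof -
  let ?H = "TE lam \<alpha> \<theta> 0"
  define K where "K = 9 * (lam + 1)\<^sup>2"
  have K0: "K > 0" using lam by (simp add: K_def)
  have Kb: "\<And>x R. 0 \<le> R \<Longrightarrow> sup_in R x \<Longrightarrow> nsq (?H x) \<le> K * nsq x"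
    using TE_bound[OF lam, of _ _ \<alpha> \<theta> 0] by (simp add: K_def)
  define S where "S = {x. \<exists>R. 0 \<le> R \<and> sup_in R x \<and> nsq x = 1}"
  define s2 where "s2 = Inf ((\<lambda>x. nsq (?H x)) ` S)"
  obtain x0 where sx0: "sup_in 3 x0" and nx0: "nsq x0 > 0" and lt0: "nsq (?H x0) < lam\<^sup>2 * nsq x0"
    using test_vec[OF lam c0, of \<alpha>] by blast
  define x1 where "x1 = (\<lambda>n. (1 / sqrt (nsq x0)) * x0 n)"
  have x1: "sup_in 3 x1 \<and> nsq x1 = 1 \<and> nsq (?H x1) = nsq (?H x0) / nsq x0"
    unfolding x1_def by (rule normalize[OF sx0 _ nx0]) simp
  have x1S: "x1 \<in> S" using x1 by (auto simp: S_def intro!: exI[of _ 3])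
  have ne: "(\<lambda>x. nsq (?H x)) ` S \<noteq> {}" using x1S by blast
  have bdd: "bdd_below ((\<lambda>x. nsq (?H x)) ` S)" by (rule bdd_belowI[of _ 0]) (auto simp: nsq_nonneg)
  have s20: "s2 \<ge> 0" unfolding s2_def by (rule cInf_greatest[OF ne]) (auto simp: nsq_nonneg)
  have s2lt: "s2 < lam\<^sup>2"
  proof -
    have "s2 \<le> nsq (?H x1)" unfolding s2_def by (rule cInf_lower[OF _ bdd]) (use x1S in blast)
    also have "\<dots> = nsq (?H x0) / nsq x0" using x1 by blast
    also have "\<dots> < lam\<^sup>2" using lt0 nx0 by (simp add: divide_less_eq)
    finally show ?thesis .
  qed
  have lower: "s2 * nsq x \<le> nsq (?H x)" if R0: "0 \<le> R" and sx: "sup_in R x" for x R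
  proof (cases "nsq x = 0")
    case True thus ?thesis using nsq_nonneg by simp
  next
    case False
    hence pos: "nsq x > 0" using nsq_nonneg[of x] by linarith
    define y where "y = (\<lambda>n. (1 / sqrt (nsq x)) * x n)"
    have y: "sup_in R y \<and> nsq y = 1 \<and> nsq (?H y) = nsq (?H x) / nsq x"
      unfolding y_def by (rule normalize[OF sx R0 pos])
    have "y \<in> S" using y R0 by (auto simp: S_def)
    hence "s2 \<le> nsq (?H y)" unfolding s2_def by (intro cInf_lower[OF _ bdd]) blast
    hence "s2 \<le> nsq (?H x) / nsq x" using y by simp
    thus ?thesis using pos by (simp add: le_divide_eq)
  qed
  have nearmin: "\<exists>\<psi> R. 0 \<le> R \<and> sup_in R \<psi> \<and> nsq \<psi> = 1 \<and> nsq (?H \<psi>) < s2 + \<eta>" if "\<eta> > 0" for \<eta>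
  proof -
    have "Inf ((\<lambda>x. nsq (?H x)) ` S) < s2 + \<eta>" using that by (simp add: s2_def)
    from cInf_lessD[OF ne this] obtain \<psi> where "\<psi> \<in> S" "nsq (?H \<psi>) < s2 + \<eta>" by blast
    thus ?thesis by (auto simp: S_def)
  qed
  define s where "s = sqrt s2"
  have ss: "s * s = s2" using s20 by (simp add: s_def)
  have s0: "s \<ge> 0" by (simp add: s_def s20)
  have slt: "s < lam"
  proof -
    have "sqrt s2 < sqrt (lam\<^sup>2)" by (rule real_sqrt_less_mono[OF s2lt])
    thus ?thesis using lam by (simp add: s_def)
  qed
  have est: "nsq (\<lambda>n. ?H (?H \<psi>) n - s2 * \<psi> n) \<le> K * \<eta>"
    if R0: "0 \<le> R" and sp: "sup_in R \<psi>" and n1: "nsq \<psi> = 1" and nm: "nsq (?H \<psi>) \<le> s2 + \<eta>" for \<psi> R \<eta>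
  proof -
    define y where "y = (\<lambda>n. ?H (?H \<psi>) n - s2 * \<psi> n)"
    define t where "t = 1 / K"
    define Q where "Q = R + 3"
    have sp2: "sup_in (R+2) \<psi>" by (rule sup_in_mono[OF sp]) simp
    have sH2: "sup_in (R+2) (?H \<psi>)" by (rule sup_in_mono[OF sup_in_TE[OF sp]]) simp
    have sHH: "sup_in (R+2) (?H (?H \<psi>))" using sup_in_TE[OF sup_in_TE[OF sp]] by (simp add: add.assoc)
    have sy: "sup_in (R+2) y" unfolding y_def using sHH sp2 by (auto simp: sup_in_def)
    have sQ: "sup_in Q u" if "sup_in (R+2) u" for u :: "int \<Rightarrow> real"
      by (rule sup_in_mono[OF that]) (simp add: Q_def)
    have sHy: "sup_in Q (?H y)" using sup_in_TE[OF sy] by (simp add: Q_def add.assoc)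
    have sHpsi: "sup_in Q (?H \<psi>)" by (rule sQ[OF sH2])
    define z where "z = (\<lambda>n. \<psi> n + (-t) * y n)"
    have sz: "sup_in (R+2) z" unfolding z_def by (rule sup_in_add_scale[OF sp2 sy])
    have Hz: "?H z = (\<lambda>n. ?H \<psi> n + (-t) * ?H y n)" unfolding z_def by (rule ext) (rule TE_lin)
    define A where "A = (\<Sum>n\<in>Iv Q. \<psi> n * y n)"
    define B where "B = (\<Sum>n\<in>Iv Q. ?H \<psi> n * ?H y n)"
    define Y where "Y = nsq y"
    have nz: "nsq z = 1 + 2*(-t)*A + t\<^sup>2 * Y"
      unfolding z_def using nsq_add_scale[OF sQ[OF sp2] sQ[OF sy], of "-t"] n1 by (simp add: A_def Y_def)
    have nHz: "nsq (?H z) = nsq (?H \<psi>) + 2*(-t)*B + t\<^sup>2 * nsq (?H y)"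
      unfolding Hz using nsq_add_scale[OF sHpsi sHy, of "-t"] by (simp add: B_def)
    have Bsym: "B = (\<Sum>n\<in>Iv Q. ?H (?H \<psi>) n * y n)"
      unfolding B_def Q_def using TE_sym[OF sH2, of lam \<alpha> \<theta> 0 y] by (simp add: add.assoc)
    have BA: "B = Y + s2 * A"
    proof -
      have "B - s2 * A = (\<Sum>n\<in>Iv Q. (?H (?H \<psi>) n - s2 * \<psi> n) * y n)"
        unfolding Bsym A_def by (simp add: sum_subtractf sum_distrib_left algebra_simps)
      also have "\<dots> = (\<Sum>n\<in>Iv Q. (y n)\<^sup>2)" by (simp add: y_def power2_eq_square)
      also have "\<dots> = Y" unfolding Y_def by (rule nsq_Iv[OF sy, symmetric]) (simp add: Q_def)
      finally show ?thesis by simp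
    qed
    have h: "s2 * (1 + 2*(-t)*A + t\<^sup>2*Y) \<le> nsq (?H \<psi>) + 2*(-t)*B + t\<^sup>2*nsq (?H y)"
      using lower[OF _ sz] R0 nz nHz by simp
    have HYl: "nsq (?H y) \<le> K * Y" unfolding Y_def by (rule Kb[OF _ sy]) (use R0 in simp)
    have "Y \<le> K * \<eta>"
      by (rule quad_aux[OF h BA nm HYl s20 _ K0 t_def]) (simp add: Y_def nsq_nonneg)
    thus ?thesis by (simp add: Y_def y_def)
  qed
  let ?P = "\<lambda>E. \<forall>\<epsilon>>0. \<exists>\<psi> R. 0 \<le> R \<and> sup_in R \<psi> \<and> nsq \<psi> = 1 \<and> nsq (TE lam \<alpha> \<theta> E \<psi>) \<le> \<epsilon>"
  have "?P s \<or> ?P (-s)"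
  proof (rule ccontr)
    assume "\<not> (?P s \<or> ?P (-s))"
    then obtain e1 e2 where e1: "e1 > 0" and e2: "e2 > 0"
      and P1: "\<And>\<psi> R. 0 \<le> R \<Longrightarrow> sup_in R \<psi> \<Longrightarrow> nsq \<psi> = 1 \<Longrightarrow> nsq (TE lam \<alpha> \<theta> s \<psi>) > e1"
      and P2: "\<And>\<psi> R. 0 \<le> R \<Longrightarrow> sup_in R \<psi> \<Longrightarrow> nsq \<psi> = 1 \<Longrightarrow> nsq (TE lam \<alpha> \<theta> (-s) \<psi>) > e2"
      by (meson not_le)
    define \<eta> where "\<eta> = e1 * e2 / K"
    have eta0: "\<eta> > 0" using e1 e2 K0 by (simp add: \<eta>_def)
    obtain \<psi> R where R0: "0 \<le> R" and sp: "sup_in R \<psi>" and n1: "nsq \<psi> = 1" and nm: "nsq (?H \<psi>) < s2 + \<eta>"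
      using nearmin[OF eta0] by blast
    define y where "y = (\<lambda>n. ?H (?H \<psi>) n - s2 * \<psi> n)"
    have ny: "nsq y \<le> e1 * e2" using est[OF R0 sp n1, of \<eta>] nm K0 by (simp add: y_def \<eta>_def)
    define \<phi> where "\<phi> = TE lam \<alpha> \<theta> (-s) \<psi>"
    have nphi: "nsq \<phi> > e2" unfolding \<phi>_def by (rule P2[OF R0 sp n1])
    have phi_eq: "\<phi> = (\<lambda>n. ?H \<psi> n + s * \<psi> n)" unfolding \<phi>_def
      by (rule ext) (subst TE_E, simp)
    have sphi: "sup_in (R+1) \<phi>" unfolding \<phi>_def by (rule sup_in_TE[OF sp])
    have Tphi: "TE lam \<alpha> \<theta> s \<phi> = y"
    proof (rule ext)
      fix n
      have "TE lam \<alpha> \<theta> s \<phi> n = ?H \<phi> n - s * \<phi> n" by (rule TE_E)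
      also have "?H \<phi> n = ?H (?H \<psi>) n + s * ?H \<psi> n" unfolding phi_eq by (rule TE_lin)
      finally show "TE lam \<alpha> \<theta> s \<phi> n = y n"
        unfolding y_def phi_eq by (simp add: algebra_simps ss[symmetric])
    qed
    have phipos: "nsq \<phi> > 0" using nphi e2 by linarith
    define \<phi>1 where "\<phi>1 = (\<lambda>n. (1 / sqrt (nsq \<phi>)) * \<phi> n)"
    have p1: "sup_in (R+1) \<phi>1 \<and> nsq \<phi>1 = 1 \<and> nsq (TE lam \<alpha> \<theta> s \<phi>1) = nsq (TE lam \<alpha> \<theta> s \<phi>) / nsq \<phi>"
      unfolding \<phi>1_def by (rule normalize[OF sphi _ phipos]) (use R0 in simp)
    have "nsq (TE lam \<alpha> \<theta> s \<phi>1) = nsq y / nsq \<phi>" using p1 Tphi by simp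
    also have "\<dots> \<le> e1 * e2 / nsq \<phi>" by (rule divide_right_mono[OF ny]) (use phipos in simp)
    also have "\<dots> \<le> e1"
      using nphi e1 phipos by (simp add: divide_le_eq mult_left_mono less_imp_le)
    finally have "nsq (TE lam \<alpha> \<theta> s \<phi>1) \<le> e1" .
    moreover have "nsq (TE lam \<alpha> \<theta> s \<phi>1) > e1" using P1[of "R+1" \<phi>1] p1 R0 by simp
    ultimately show False by simp
  qed
  thus ?thesis
  proof
    assume "?P s" thus ?thesis using s0 slt lam by (intro exI[of _ s]) simp
  next
    assume "?P (-s)" thus ?thesis using s0 slt lam by (intro exI[of _ "-s"]) simp
  qed
qed

theorem corollary3p5:
  fixes lam \<alpha> \<theta> :: real
  assumes "lam > 0" and "\<alpha> \<notin> \<rat>" and "\<theta> \<in> T0 \<alpha>"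
  shows "complex_of_real lam \<in> spec_l2Z (Hop lam \<alpha> \<theta>)
       \<and> complex_of_real (- lam) \<in> spec_l2Z (Hop lam \<alpha> \<theta>)
       \<and> (\<exists>E::real. - lam < E \<and> E < lam \<and> complex_of_real E \<in> spec_l2Z (Hop lam \<alpha> \<theta>))"
proof (intro conjI)
  show "complex_of_real lam \<in> spec_l2Z (Hop lam \<alpha> \<theta>)" by (rule plus_lam_spec[OF assms(1)])
  show "complex_of_real (- lam) \<in> spec_l2Z (Hop lam \<alpha> \<theta>)" by (rule minus_lam_spec[OF assms(1)])
  have "\<forall>n::int. cos (2 * pi * (of_int n * \<alpha> + \<theta>)) \<noteq> 0" using assms(3) by (simp add: T0_def)
  hence "cos (2 * pi * (of_int (0::int) * \<alpha> + \<theta>)) \<noteq> 0" by blast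
  hence c0: "cos (2*pi*\<theta>) \<noteq> 0" by simp
  obtain E where E: "- lam < E" "E < lam"
    and P: "\<forall>\<epsilon>>0. \<exists>\<psi> R. 0 \<le> R \<and> sup_in R \<psi> \<and> nsq \<psi> = 1 \<and> nsq (TE lam \<alpha> \<theta> E \<psi>) \<le> \<epsilon>"
    using var_part[OF assms(1) c0, of \<alpha>] by blast
  have "complex_of_real E \<in> spec_l2Z (Hop lam \<alpha> \<theta>)" by (rule weyl[OF assms(1)]) (use P in blast)
  thus "\<exists>E::real. - lam < E \<and> E < lam \<and> complex_of_real E \<in> spec_l2Z (Hop lam \<alpha> \<theta>)" using E by blast
qed

end
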